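(* Let $\alpha^\star_n\in\mathcal D^\star_n$ for every $n$ and $\alpha^\star\in\mathcal D^\star_0$ with $\sup_{\Delta\times[0,1]^d}|\alpha^\star_n-\alpha^\star|\to0$. Then for every $j\in\{1,\dots,d\}$, $$\sup_{(s,t,u)\in\Delta\times[0,1]}\Big|\sqrt n\,\lambda_n(s,t)\{I_n(U^\star_n+n^{-1/2}\alpha^\star_{n,j})(s,t,u)-u\}+\alpha^\star_j(s,t,u)\Big|\to0.$$
   Context: $C$ is a fixed $d$-dimensional copula. $\Delta=\{(s,t)\in[0,1]^2:s\le t\}$, $\lambda_n(s,t)=(\lfloor nt\rfloor-\lfloor ns\rfloor)/n$. $\mathcal E$ is the set of right-continuous nondecreasing $F:[0,1]\to[0,1]$ with $F(0)=0$, $F(1)=1$. $\mathcal E^\star_n$ is the set of $F^\star:\Delta\times[0,1]\to[0,1]$ such that $u\mapsto\lambda_n(s,t)^{-1}F^\star(s,t,u)\in\mathcal E$ when $\lfloor ns\rfloor<\lfloor nt\rfloor$ and $F^\star(s,t,\cdot)=0$ when $\lfloor ns\rfloor=\lfloor nt\rfloor$. For $F^\star\in\mathcal E^\star_n$, $I_n(F^\star)(s,t,u)=\inf\{v\in[0,1]:F^\star(s,t,v)\ge\lambda_n(s,t)u\}$. $U^\star_n(s,t,u)=\lambda_n(s,t)u$. For $H^\star$ on $\Delta\times[0,1]^d$, $H^\star_j(s,t,u)=H^\star(s,t,\vec u_{\{j\}})$, where $\vec u_{\{j\}}$ has $j$th component $u$ and others $1$; $\mathcal E^\star_{n,d}=\{H^\star:\Delta\times[0,1]^d\to[0,1]:H^\star_j\in\mathcal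 E^\star_n\ \forall j\}$. $C^\star_n(s,t,\vec u)=\lambda_n(s,t)C(\vec u)$. $\mathcal D^\star$ is the set of bounded $\alpha^\star$ on $\Delta\times[0,1]^d$ with $\alpha^\star(s,t,\cdot)=0$ if $s=t$, and $\alpha^\star(s,t,\vec u)=0$ if $s<t$ and either some component of $\vec u$ is $0$ or $\vec u=(1,\dots,1)$. $\mathcal D^\star_n=\{\alpha^\star\in\mathcal D^\star:C^\star_n+n^{-1/2}\alpha^\star\in\mathcal E^\star_{n,d}\}$, $\mathcal D^\star_0=\mathcal D^\star\cap\mathcal C(\Delta\times[0,1]^d)$. *)

theory Defs
  imports "HOL-Analysis.Analysis"
begin

text \<open>Points of [0,1]^d are vectors of type real^'d (d = CARD('d)).\<close>

definition unit_cube :: "(real^'d) set" where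
  "unit_cube = {u. \<forall>i. 0 \<le> u $ i \<and> u $ i \<le> 1}"

definition is_copula :: "(real^'d \<Rightarrow> real) \<Rightarrow> bool" where
  "is_copula C \<longleftrightarrow>
     (\<forall>u\<in>unit_cube. 0 \<le> C u \<and> C u \<le> 1) \<and>
     (\<forall>u\<in>unit_cube. (\<exists>i. u $ i = 0) \<longrightarrow> C u = 0) \<and>
     (\<forall>j. \<forall>v\<in>{0..1}. C (\<chi> i. if i = j then v else 1) = v) \<and>
     (\<forall>a\<in>unit_cube. \<forall>b\<in>unit_cube. (\<forall>i. a $ i \<le> b $ i) \<longrightarrow>
        0 \<le> (\<Sum>S\<in>Pow (UNIV :: 'd set). (-1) ^ card S * C (\<chi> i. if i \<in> S then a $ i else b $ i)))"

definition Delta :: "(real \<times> real) set" where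
  "Delta = {(s, t). 0 \<le> s \<and> s \<le> t \<and> t \<le> 1}"

definition lam :: "nat \<Rightarrow> real \<Rightarrow> real \<Rightarrow> real" where
  "lam n s t = real_of_int (\<lfloor>real n * t\<rfloor> - \<lfloor>real n * s\<rfloor>) / real n"

definition Ecal :: "(real \<Rightarrow> real) set" where
  "Ecal = {F. (\<forall>x\<in>{0..1}. 0 \<le> F x \<and> F x \<le> 1) \<and> mono_on {0..1} F \<and>
              (\<forall>x\<in>{0..<1}. continuous (at x within {x..1}) F) \<and> F 0 = 0 \<and> F 1 = 1}"

definition Estar :: "nat \<Rightarrow> (real \<Rightarrow> real \<Rightarrow> real \<Rightarrow> real) set" where
  "Estar n = {F. \<forall>(s,t)\<in>Delta.
      (\<forall>u\<in>{0..1}. 0 \<le> F s t u \<and> F s t u \<le> 1) \<and>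
      (if \<lfloor>real n * s\<rfloor> < \<lfloor>real n * t\<rfloor>
       then (\<lambda>u. F s t u / lam n s t) \<in> Ecal
       else (\<forall>u\<in>{0..1}. F s t u = 0))}"

definition In_op :: "nat \<Rightarrow> (real \<Rightarrow> real \<Rightarrow> real \<Rightarrow> real) \<Rightarrow> real \<Rightarrow> real \<Rightarrow> real \<Rightarrow> real" where
  "In_op n F s t u = Inf {v\<in>{0..1}. F s t v \<ge> lam n s t * u}"

definition Ustar :: "nat \<Rightarrow> real \<Rightarrow> real \<Rightarrow> real \<Rightarrow> real" where
  "Ustar n s t u = lam n s t * u"

definition vec_j :: "'d \<Rightarrow> real \<Rightarrow> real^'d" where
  "vec_j j u = (\<chi> i. if i = j then u else 1)"

definition marg :: "(real \<Rightarrow> real \<Rightarrow> real^'d \<Rightarrow> real) \<Rightarrow> 'd \<Rightarrow> real \<Rightarrow> real \<Rightarrow> real \<Rightarrow> real" where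
  "marg H j s t u = H s t (vec_j j u)"

definition Estar_d :: "nat \<Rightarrow> (real \<Rightarrow> real \<Rightarrow> real^'d \<Rightarrow> real) set" where
  "Estar_d n = {H. (\<forall>(s,t)\<in>Delta. \<forall>u\<in>unit_cube. 0 \<le> H s t u \<and> H s t u \<le> 1) \<and>
                   (\<forall>j. marg H j \<in> Estar n)}"

definition Cstar :: "(real^'d \<Rightarrow> real) \<Rightarrow> nat \<Rightarrow> real \<Rightarrow> real \<Rightarrow> real^'d \<Rightarrow> real" where
  "Cstar C n s t u = lam n s t * C u"

definition Dstar :: "(real \<Rightarrow> real \<Rightarrow> real^'d \<Rightarrow> real) set" where
  "Dstar = {a. (\<exists>B. \<forall>(s,t)\<in>Delta. \<forall>u\<in>unit_cube. \<bar>a s t u\<bar> \<le> B) \<and>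
               (\<forall>s\<in>{0..1}. \<forall>u\<in>unit_cube. a s s u = 0) \<and>
               (\<forall>(s,t)\<in>Delta. s < t \<longrightarrow>
                  (\<forall>u\<in>unit_cube. ((\<exists>i. u $ i = 0) \<or> u = (\<chi> i. 1)) \<longrightarrow> a s t u = 0))}"

definition Dstar_n :: "(real^'d \<Rightarrow> real) \<Rightarrow> nat \<Rightarrow> (real \<Rightarrow> real \<Rightarrow> real^'d \<Rightarrow> real) set" where
  "Dstar_n C n = {a\<in>Dstar. (\<lambda>s t u. Cstar C n s t u + a s t u / sqrt (real n)) \<in> Estar_d n}"

definition Dstar_0 :: "(real \<Rightarrow> real \<Rightarrow> real^'d \<Rightarrow> real) set" where
  "Dstar_0 = {a\<in>Dstar. continuous_on {(s, t, u). (s, t) \<in> Delta \<and> u \<in> unit_cube}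
                          (\<lambda>(s, t, u). a s t u)}"

end

theory Submission
  imports Defs
begin

lemma core:
  fixes an a :: "real \<Rightarrow> real" and l rn u ep eta delta :: real
  assumes rn: "rn > 0" and l: "l > 0" and u: "0 \<le> u" "u \<le> 1"
    and an1: "an 1 = 0" and a0: "a 0 = 0"
    and close: "\<forall>v\<in>{0..1}. \<bar>an v - a v\<bar> \<le> ep"
    and uc: "\<forall>v\<in>{0..1}. \<forall>w\<in>{0..1}. \<bar>v - w\<bar> < delta \<longrightarrow> \<bar>a v - a w\<bar> < eta"
    and eta: "eta > 0" and delta: "delta > 0"
  defines "I \<equiv> Inf {v\<in>{0..1}. l * u \<le> l * v + an v / rn}"
  shows "0 \<le> I \<and> I \<le> 1 \<and> \<bar>rn * l * (I - u) + a u\<bar> \<le> \<bar>a u - a I\<bar> + ep + 2 * eta"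
proof -
  define S where "S = {v\<in>{0..1}. l * u \<le> l * v + an v / rn}"
  define M where "M = rn * l"
  have M: "M > 0" using rn l by (simp add: M_def)
  have eqv: "(l * u \<le> l * v + an v / rn) = (M * u \<le> M * v + an v)" for v
  proof -
    have "(l * u \<le> l * v + an v / rn) = (rn * (l * u) \<le> rn * (l * v + an v / rn))"
      using rn by simp
    also have "rn * (l * v + an v / rn) = M * v + an v" using rn by (simp add: M_def field_simps)
    finally show ?thesis by (simp add: M_def mult.assoc)
  qed
  have S1: "1 \<in> S" using an1 u l by (simp add: S_def)
  have bdd: "bdd_below S" unfolding S_def by (rule bdd_belowI[of _ 0]) auto
  have ne: "S \<noteq> {}" using S1 by auto
  have I: "I = Inf S" unfolding I_def S_def ..
  have I1: "I \<le> 1" using cInf_lower[OF S1 bdd] I by simp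
  have I0: "0 \<le> I" unfolding I using ne by (rule cInf_greatest) (auto simp: S_def)
  have ep0: "0 \<le> ep" using close by force
  define r where "r = min delta (eta / M) / 2"
  have r0: "r > 0" using delta eta M by (simp add: r_def)
  have Mr: "M * r \<le> eta / 2"
  proof -
    have "r \<le> (eta / M) / 2" by (simp add: r_def)
    hence "M * r \<le> M * ((eta / M) / 2)" using M by (intro mult_left_mono) auto
    also have "\<dots> = eta / 2" using M by simp
    finally show ?thesis .
  qed
  have rd: "r < delta" using delta r0 by (simp add: r_def)
  have aIu: "a I \<in> {a I}" by simp
  have upper: "M * (I - u) + a u \<le> a u - a I + ep + 2 * eta"
  proof (cases "I = 0")
    case True
    have "M * (I - u) \<le> 0" using True M u by (simp add: mult_nonneg_nonneg)
    thus ?thesis using True a0 ep0 eta by simp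
  next
    case False
    hence Ipos: "I > 0" using I0 by simp
    define v where "v = max 0 (I - r)"
    have v: "v < I" "0 \<le> v" "v \<le> 1" "I - v \<le> r" using Ipos r0 I1 by (auto simp: v_def)
    have "v \<notin> S"
    proof
      assume "v \<in> S"
      hence "I \<le> v" using cInf_lower[OF _ bdd] I by simp
      thus False using v by simp
    qed
    hence lt: "M * v + an v < M * u" using v eqv[of v] by (auto simp: S_def)
    have d1: "\<bar>a v - a I\<bar> < eta" using uc v I0 I1 rd by auto
    have d2: "\<bar>an v - a v\<bar> \<le> ep" using close v by auto
    have "M * (I - v) \<le> M * r" using mult_left_mono[OF v(4), of M] M by simp
    hence d3: "M * (I - v) \<le> eta / 2" using Mr by linarith
    have "M * (I - u) = M * v - M * u + M * (I - v)" by (simp add: algebra_simps)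
    thus ?thesis using lt d1 d2 d3 eta by linarith
  qed
  have lower: "a u - a I - ep - 2 * eta \<le> M * (I - u) + a u"
  proof -
    have "Inf S < I + r" using I r0 by simp
    then obtain v where vS: "v \<in> S" and vr: "v < I + r" using cInf_less_iff[OF ne bdd] by auto
    have vI: "I \<le> v" using cInf_lower[OF vS bdd] I by simp
    have v01: "0 \<le> v" "v \<le> 1" using vS by (auto simp: S_def)
    have ge: "M * u \<le> M * v + an v" using vS eqv[of v] by (auto simp: S_def)
    have d1: "\<bar>a v - a I\<bar> < eta" using uc v01 I0 I1 rd vI vr by auto
    have d2: "\<bar>an v - a v\<bar> \<le> ep" using close v01 by auto
    have "v - I \<le> r" using vr by simp
    hence "M * (v - I) \<le> M * r" using mult_left_mono[of "v - I" r M] M by simp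
    hence d3: "M * (v - I) \<le> eta / 2" using Mr by linarith
    have "M * (I - u) = M * v - M * u - M * (v - I)" by (simp add: algebra_simps)
    thus ?thesis using ge d1 d2 d3 eta by linarith
  qed
  have "\<bar>M * (I - u) + a u\<bar> \<le> \<bar>a u - a I\<bar> + ep + 2 * eta"
    using upper lower by linarith
  thus ?thesis using I0 I1 by (simp add: M_def)
qed

lemma lam_nonneg: "s \<le> t \<Longrightarrow> 0 \<le> lam n s t"
  unfolding lam_def
  by (intro divide_nonneg_nonneg) (auto intro!: floor_mono mult_left_mono)

lemma lam_gap: assumes "n \<ge> 1" shows "t - s < lam n s t + 1 / real n"
proof -
  have n: "real n > 0" using assms by simp
  have "real n * t - 1 < of_int \<lfloor>real n * t\<rfloor>" by linarith
  moreover have "of_int \<lfloor>real n * s\<rfloor> \<le> real n * s" by simp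
  ultimately have "real n * (t - s) < real_of_int (\<lfloor>real n * t\<rfloor> - \<lfloor>real n * s\<rfloor>) + 1"
    unfolding of_int_diff right_diff_distrib by linarith
  hence "(real n * (t - s)) / real n < (real_of_int (\<lfloor>real n * t\<rfloor> - \<lfloor>real n * s\<rfloor>) + 1) / real n"
    using n by (intro divide_strict_right_mono) auto
  thus ?thesis using n by (simp add: lam_def add_divide_distrib)
qed

lemma lam_pos: assumes "lam n s t > 0" shows "s < t"
proof (rule ccontr)
  assume "\<not> s < t"
  hence "real n * t \<le> real n * s" by (auto intro: mult_left_mono)
  hence "\<lfloor>real n * t\<rfloor> \<le> \<lfloor>real n * s\<rfloor>" by (rule floor_mono)
  hence "lam n s t \<le> 0" unfolding lam_def by (intro divide_nonpos_nonneg) auto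
  thus False using assms by simp
qed

lemma vec_j_cube: "v \<in> {0..1} \<Longrightarrow> vec_j j v \<in> unit_cube"
  by (auto simp: vec_j_def unit_cube_def)

lemma dist_vec_j: "dist (vec_j j v) (vec_j j w) \<le> \<bar>v - w\<bar>"
proof -
  have "dist (vec_j j v) (vec_j j w) \<le> (\<Sum>i\<in>UNIV. \<bar>(vec_j j v - vec_j j w) $ i\<bar>)"
    unfolding dist_norm by (rule norm_le_l1_cart)
  also have "\<dots> = (\<Sum>i\<in>UNIV. if i = j then \<bar>v - w\<bar> else 0)"
    by (intro sum.cong) (auto simp: vec_j_def)
  also have "\<dots> = \<bar>v - w\<bar>" by simp
  finally show ?thesis .
qed

lemma dist_triple1: "dist (s::real, t::real, x::'a::metric_space) (s, t, y) = dist x y"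
  by (simp add: dist_Pair_Pair)

lemma dist_triple2: "dist (s::real, t::real, x::'a::metric_space) (s, t', x) = dist t t'"
  by (simp add: dist_Pair_Pair)

lemma K_compact: "compact {(s, t, u). (s, t) \<in> Delta \<and> u \<in> (unit_cube :: (real^'d) set)}"
proof (subst compact_eq_bounded_closed, intro conjI)
  let ?K = "{(s, t, u). (s, t) \<in> Delta \<and> u \<in> (unit_cube :: (real^'d) set)}"
  have "?K \<subseteq> cbox (0, 0, 0) (1, 1, 1)"
    by (auto simp: cbox_Pair_eq Delta_def unit_cube_def mem_box_cart)
  thus "bounded ?K" using bounded_cbox bounded_subset by blast
  have "?K = {x. 0 \<le> fst x} \<inter> {x. fst x \<le> fst (snd x)} \<inter> {x. fst (snd x) \<le> 1}
      \<inter> (\<Inter>i. {x. 0 \<le> snd (snd x) $ i} \<inter> {x. snd (snd x) $ i \<le> 1})"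
    by (auto simp: Delta_def unit_cube_def)
  also have "closed \<dots>"
    by (intro closed_Int closed_INT closed_Collect_le continuous_intros ballI)
  finally show "closed ?K" .
qed

theorem lemmaB2:
  fixes C :: "real^'d \<Rightarrow> real"
    and alpha_n :: "nat \<Rightarrow> real \<Rightarrow> real \<Rightarrow> real^'d \<Rightarrow> real"
    and alpha :: "real \<Rightarrow> real \<Rightarrow> real^'d \<Rightarrow> real"
  assumes "is_copula C"
    and "\<forall>n\<ge>1. alpha_n n \<in> Dstar_n C n"
    and "alpha \<in> Dstar_0"
    and "(\<lambda>n. SUP (s, t, u) \<in> {(s, t, u). (s, t) \<in> Delta \<and> u \<in> unit_cube}.
              \<bar>alpha_n n s t u - alpha s t u\<bar>) \<longlonglongrightarrow> 0"
  shows "\<forall>j. (\<lambda>n. SUP (s, t, u) \<in> {(s, t, u). (s, t) \<in> Delta \<and> u \<in> {0..1}}.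
              \<bar>sqrt (real n) * lam n s t *
                 (In_op n (\<lambda>s t v. Ustar n s t v + marg (alpha_n n) j s t v / sqrt (real n)) s t u - u)
               + marg alpha j s t u\<bar>) \<longlonglongrightarrow> 0"
proof (intro allI)
  fix j :: 'd
  define K where "K = {(s, t, u). (s, t) \<in> Delta \<and> u \<in> (unit_cube :: (real^'d) set)}"
  define f where "f = (\<lambda>(s, t, u). alpha s t u)"
  define g where "g n = (\<lambda>(s, t, u). \<bar>alpha_n n s t u - alpha s t u\<bar>)" for n
  define E where "E n = Sup (g n ` K)" for n
  have E: "E \<longlonglongrightarrow> 0" using assms(4) unfolding E_def g_def K_def .
  have cont: "continuous_on K f" using assms(3) unfolding Dstar_0_def K_def f_def by simp
  have uc: "uniformly_continuous_on K f"
    using compact_uniformly_continuous[OF cont] K_compact unfolding K_def by blast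
  have aD: "alpha \<in> Dstar" using assms(3) by (simp add: Dstar_0_def)
  then obtain B where B: "\<forall>(s,t)\<in>Delta. \<forall>u\<in>unit_cube. \<bar>alpha s t u\<bar> \<le> B"
    by (auto simp: Dstar_def)
  have diag: "\<forall>s\<in>{0..1}. \<forall>u\<in>unit_cube. alpha s s u = 0" using aD by (simp add: Dstar_def)
  have bnd0: "\<forall>(s,t)\<in>Delta. s < t \<longrightarrow> (\<forall>u\<in>unit_cube. ((\<exists>i. u $ i = 0) \<or> u = (\<chi> i. 1)) \<longrightarrow> alpha s t u = 0)"
    using aD by (simp add: Dstar_def)
  have anD: "alpha_n n \<in> Dstar" if "n \<ge> 1" for n using assms(2) that by (simp add: Dstar_n_def)
  have bndn: "\<forall>(s,t)\<in>Delta. s < t \<longrightarrow> (\<forall>u\<in>unit_cube. ((\<exists>i. u $ i = 0) \<or> u = (\<chi> i. 1)) \<longrightarrow> alpha_n n s t u = 0)"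
    if "n \<ge> 1" for n using anD[OF that] by (simp add: Dstar_def)
  have Eup: "\<bar>alpha_n n s t x - alpha s t x\<bar> \<le> E n"
    if n: "n \<ge> 1" and st: "(s,t) \<in> Delta" and x: "x \<in> unit_cube" for n s t x
  proof -
    obtain Bn where Bn: "\<forall>(s,t)\<in>Delta. \<forall>u\<in>unit_cube. \<bar>alpha_n n s t u\<bar> \<le> Bn"
      using anD[OF n] by (auto simp: Dstar_def)
    have "bdd_above (g n ` K)"
    proof (rule bdd_aboveI2)
      fix y assume "y \<in> K"
      then obtain s' t' u' where y: "y = (s', t', u')" "(s', t') \<in> Delta" "u' \<in> unit_cube"
        by (auto simp: K_def)
      have "\<bar>alpha_n n s' t' u'\<bar> \<le> Bn" "\<bar>alpha s' t' u'\<bar> \<le> B" using Bn B y by auto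
      thus "g n y \<le> Bn + B" using y by (simp add: g_def)
    qed
    moreover have "(s, t, x) \<in> K" using st x by (simp add: K_def)
    ultimately have "g n (s, t, x) \<le> E n" unfolding E_def by (rule cSUP_upper[rotated])
    thus ?thesis by (simp add: g_def)
  qed
  show "(\<lambda>n. SUP (s, t, u) \<in> {(s, t, u). (s, t) \<in> Delta \<and> u \<in> {0..1}}.
              \<bar>sqrt (real n) * lam n s t *
                 (In_op n (\<lambda>s t v. Ustar n s t v + marg (alpha_n n) j s t v / sqrt (real n)) s t u - u)
               + marg alpha j s t u\<bar>) \<longlonglongrightarrow> 0"
  proof (rule LIMSEQ_I)
    fix e :: real assume e: "0 < e"
    define eta where "eta = min (e / 8) (1 / 3)"
    have eta: "eta > 0" "eta \<le> e / 8" "eta \<le> 1 / 3" using e by (auto simp: eta_def)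
    obtain delta where delta: "delta > 0"
      and dprop: "\<forall>x\<in>K. \<forall>x'\<in>K. dist x' x < delta \<longrightarrow> dist (f x') (f x) < eta"
      using uc eta(1) unfolding uniformly_continuous_on_def by metis
    obtain N1 where N1: "\<forall>n\<ge>N1. norm (E n - 0) < eta" using LIMSEQ_D[OF E eta(1)] by blast
    have B0: "0 \<le> B" using B vec_j_cube[of 0 j] by (force simp: Delta_def)
    define N2 where "N2 = nat \<lceil>2 / delta\<rceil> + 1"
    define c where "c = 2 * (3 * B + 1) / delta ^ 2"
    define N3 where "N3 = nat \<lceil>c ^ 2\<rceil>"
    define N where "N = max (max N1 N2) (max N3 1)"
    have pw: "\<bar>sqrt (real n) * lam n s t *
                 (In_op n (\<lambda>s t v. Ustar n s t v + marg (alpha_n n) j s t v / sqrt (real n)) s t u - u)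
               + marg alpha j s t u\<bar> \<le> 5 * eta"
      if n: "n \<ge> N" and st: "(s, t) \<in> Delta" and u: "u \<in> {0..1}" for n s t u
    proof -
      have n1: "n \<ge> 1" using n by (simp add: N_def)
      have rn: "sqrt (real n) > 0" using n1 by simp
      have En: "E n < eta" using N1 n by (auto simp: N_def)
      have "N2 \<le> n" using n by (simp add: N_def)
      hence "real N2 \<le> real n" by linarith
      moreover have "2 / delta \<le> real N2" unfolding N2_def by linarith
      ultimately have "real n \<ge> 2 / delta" by linarith
      hence invn: "1 / real n \<le> delta / 2" using delta n1
        by (simp add: field_simps)
      have "N3 \<le> n" using n by (simp add: N_def)
      hence "real N3 \<le> real n" by linarith
      moreover have "c ^ 2 \<le> real N3" unfolding N3_def by linarith
      ultimately have "real n \<ge> c ^ 2" by linarith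
      hence sqn: "sqrt (real n) \<ge> c" by (rule real_le_rsqrt)
      define l where "l = lam n s t"
      define an where "an v = alpha_n n s t (vec_j j v)" for v
      define a where "a v = alpha s t (vec_j j v)" for v
      have st': "0 \<le> s" "s \<le> t" "t \<le> 1" using st by (auto simp: Delta_def)
      have lnn: "0 \<le> l" using st' by (simp add: l_def lam_nonneg)
      have gap: "t - s < l + 1 / real n" using lam_gap[OF n1] by (simp add: l_def)
      have inK: "(s, t, vec_j j v) \<in> K" if "v \<in> {0..1}" for v
        using st vec_j_cube[OF that] by (simp add: K_def)
      have ucA: "\<forall>v\<in>{0..1}. \<forall>w\<in>{0..1}. \<bar>v - w\<bar> < delta \<longrightarrow> \<bar>a v - a w\<bar> < eta"
      proof (intro ballI impI)
        fix v w :: real assume v: "v \<in> {0..1}" and w: "w \<in> {0..1}" and vw: "\<bar>v - w\<bar> < delta"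
        have "dist (s, t, vec_j j v) (s, t, vec_j j w) < delta"
          using dist_vec_j[of j v w] vw by (simp add: dist_triple1)
        hence "dist (f (s, t, vec_j j v)) (f (s, t, vec_j j w)) < eta"
          using dprop inK[OF v] inK[OF w] by blast
        thus "\<bar>a v - a w\<bar> < eta" by (simp add: f_def a_def dist_real_def)
      qed
      have diagA: "\<forall>w\<in>{0..1}. \<bar>a w\<bar> < eta" if small: "t - s < delta"
      proof
        fix w :: real assume w: "w \<in> {0..1}"
        have K2: "(s, s, vec_j j w) \<in> K" using st' vec_j_cube[OF w] by (simp add: K_def Delta_def)
        have "dist (s, t, vec_j j w) (s, s, vec_j j w) < delta"
          using small st' by (simp add: dist_triple2 dist_real_def)
        hence "dist (f (s, t, vec_j j w)) (f (s, s, vec_j j w)) < eta"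
          using dprop inK[OF w] K2 by blast
        moreover have s01: "s \<in> {0..1}" using st' by simp
        have "f (s, s, vec_j j w) = 0" using bspec[OF bspec[OF diag s01] vec_j_cube[OF w]] by (simp add: f_def)
        ultimately show "\<bar>a w\<bar> < eta" by (simp add: f_def a_def dist_real_def)
      qed
      have closeA: "\<forall>v\<in>{0..1}. \<bar>an v - a v\<bar> \<le> E n"
      proof
        fix v :: real assume v: "v \<in> {0..1}"
        show "\<bar>an v - a v\<bar> \<le> E n" unfolding an_def a_def by (rule Eup[OF n1 st vec_j_cube[OF v]])
      qed
      have aB: "\<forall>v\<in>{0..1}. \<bar>a v\<bar> \<le> B" proof
        fix v :: real assume "v \<in> {0..1}"
        have "\<forall>x\<in>unit_cube. \<bar>alpha s t x\<bar> \<le> B" using B st by auto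
        thus "\<bar>a v\<bar> \<le> B" using vec_j_cube[OF \<open>v \<in> {0..1}\<close>] unfolding a_def by blast
      qed
      have In: "In_op n (\<lambda>s t v. Ustar n s t v + marg (alpha_n n) j s t v / sqrt (real n)) s t u
          = Inf {v\<in>{0..1}. l * u \<le> l * v + an v / sqrt (real n)}"
        by (simp add: In_op_def Ustar_def marg_def an_def l_def)
      have ma: "marg alpha j s t u = a u" by (simp add: marg_def a_def)
      show ?thesis
      proof (cases "l = 0")
        case True
        have "t - s < delta" using gap True invn delta by linarith
        hence "\<bar>a u\<bar> < eta" using diagA u by blast
        thus ?thesis using True eta ma by (simp add: l_def[symmetric])
      next
        case False
        hence lpos: "l > 0" using lnn by simp
        have slt: "s < t" using lam_pos lpos by (simp add: l_def)
        have v1: "vec_j j 1 = (\<chi> i. 1)" by (simp add: vec_j_def vec_eq_iff)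
        have an1: "an 1 = 0" using bndn[OF n1] st slt vec_j_cube[of 1 j] v1 by (auto simp: an_def)
        have a0: "a 0 = 0" using bnd0 st slt vec_j_cube[of 0 j]
          by (auto simp: a_def vec_j_def)
        define I where "I = Inf {v\<in>{0..1}. l * u \<le> l * v + an v / sqrt (real n)}"
        have core: "0 \<le> I \<and> I \<le> 1 \<and> \<bar>sqrt (real n) * l * (I - u) + a u\<bar> \<le> \<bar>a u - a I\<bar> + E n + 2 * eta"
          unfolding I_def
          by (rule core[OF rn lpos _ _ an1 a0 closeA ucA eta(1) delta]) (use u in auto)
        have I01: "I \<in> {0..1}" using core by simp
        have T: "\<bar>sqrt (real n) * lam n s t *
                 (In_op n (\<lambda>s t v. Ustar n s t v + marg (alpha_n n) j s t v / sqrt (real n)) s t u - u)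
               + marg alpha j s t u\<bar> = \<bar>sqrt (real n) * l * (I - u) + a u\<bar>"
          by (simp add: In ma I_def l_def)
        show ?thesis
        proof (cases "l \<le> delta / 2")
          case True
          have "t - s < delta" using gap True invn by linarith
          hence "\<bar>a u\<bar> < eta" "\<bar>a I\<bar> < eta" using diagA u I01 by blast+
          thus ?thesis using T core En by linarith
        next
          case False
          define M where "M = sqrt (real n) * l"
          have Mgt: "M > sqrt (real n) * (delta / 2)" using False rn by (simp add: M_def)
          have "\<bar>a u\<bar> \<le> B" "\<bar>a I\<bar> \<le> B" using aB u I01 by auto
          hence bd: "\<bar>M * (I - u)\<bar> \<le> 3 * B + 1"
            using core En eta(3) unfolding M_def by linarith
          have Iu: "\<bar>I - u\<bar> < delta"
          proof (rule ccontr)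
            assume "\<not> \<bar>I - u\<bar> < delta"
            hence h: "\<bar>I - u\<bar> \<ge> delta" by simp
            have M0: "M > 0" using rn lpos by (simp add: M_def)
            have "M * delta \<le> M * \<bar>I - u\<bar>" using h M0 by simp
            also have "\<dots> = \<bar>M * (I - u)\<bar>" using M0 by (simp add: abs_mult)
            finally have m1: "M * delta \<le> \<bar>M * (I - u)\<bar>" .
            have "sqrt (real n) * (delta / 2) * delta < M * delta" using Mgt delta by simp
            moreover have "c * (delta / 2) * delta \<le> sqrt (real n) * (delta / 2) * delta"
              using sqn delta by simp
            moreover have "c * (delta / 2) * delta = 3 * B + 1" using delta
              by (simp add: c_def power2_eq_square field_simps)
            ultimately show False using m1 bd by linarith
          qed
          hence "\<bar>a u - a I\<bar> < eta" using ucA[rule_format, OF u I01] by (simp add: abs_minus_commute)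
          thus ?thesis using T core En by linarith
        qed
      qed
    qed
    show "\<exists>no. \<forall>n\<ge>no. norm ((SUP (s, t, u) \<in> {(s, t, u). (s, t) \<in> Delta \<and> u \<in> {0..1}}.
              \<bar>sqrt (real n) * lam n s t *
                 (In_op n (\<lambda>s t v. Ustar n s t v + marg (alpha_n n) j s t v / sqrt (real n)) s t u - u)
               + marg alpha j s t u\<bar>) - 0) < e"
    proof (intro exI allI impI)
      fix n assume n: "n \<ge> N"
      define h where "h = (\<lambda>(s, t, u). \<bar>sqrt (real n) * lam n s t *
                 (In_op n (\<lambda>s t v. Ustar n s t v + marg (alpha_n n) j s t v / sqrt (real n)) s t u - u)
               + marg alpha j s t u\<bar>)"
      define D where "D = {(s::real, t::real, u::real). (s, t) \<in> Delta \<and> u \<in> {0..1}}"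
      have hle: "h y \<le> 5 * eta" if "y \<in> D" for y
        using that pw[OF n] by (auto simp: D_def h_def)
      have D0: "(0, 0, 0) \<in> D" by (simp add: D_def Delta_def)
      have ne: "D \<noteq> {}" using D0 by blast
      have le: "Sup (h ` D) \<le> 5 * eta" using ne hle by (intro cSUP_least) auto
      have bdd: "bdd_above (h ` D)" using hle by (intro bdd_aboveI2) auto
      have "h (0, 0, 0) \<le> Sup (h ` D)" using cSUP_upper[OF D0 bdd] .
      moreover have "0 \<le> h (0, 0, 0)" by (simp add: h_def)
      ultimately have ge: "0 \<le> Sup (h ` D)" by linarith
      have "norm (Sup (h ` D) - 0) < e" using le ge eta by simp
      thus "norm ((SUP (s, t, u) \<in> {(s, t, u). (s, t) \<in> Delta \<and> u \<in> {0..1}}.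
              \<bar>sqrt (real n) * lam n s t *
                 (In_op n (\<lambda>s t v. Ustar n s t v + marg (alpha_n n) j s t v / sqrt (real n)) s t u - u)
               + marg alpha j s t u\<bar>) - 0) < e" unfolding h_def D_def .
    qed
  qed
qed

end
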